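(* Let $n\ge0$ and let $a_{n,0},\dots,a_{n,n}$ be real numbers with $a_{n,k}=a_{n,n-k}$ for all $0\le k\le n$. Then the associated polynomial $P_n$ satisfies $P_n(-z)=(-1)^nP_n(z)$, i.e. $P_n$ has the same parity as $n$.
   Context: $\imath=\sqrt{-1}$. $\mathcal{A}$ denotes the quotient of the free associative $\mathbb{C}$-algebra on two noncommuting generators $p,q$ by the two-sided ideal generated by $qp-pq-\imath$, and $z=\tfrac12(qp+pq)\in\mathcal A$. For $n\ge0$ and complex numbers $a_{n,0},\dots,a_{n,n}$, there is a unique polynomial $P_n\in\mathbb{C}[X]$ of degree at most $n$ with $\sum_{k=0}^n a_{n,k}q^kp^nq^{n-k}=P_n(z)$ in $\mathcal A$; it is called the polynomial associated to $\{a_{n,k}\}$. *)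

theory Defs
  imports Complex_Main "HOL-Library.Function_Algebras" "HOL-Computational_Algebra.Polynomial"
begin

text \<open>The free associative complex algebra on two generators p, q is modelled as
  finitely supported functions from words (lists of generators) to complex coefficients;
  addition and scalar multiplication are pointwise, multiplication is concatenation
  convolution. The Weyl algebra A is its quotient by the two-sided ideal generated by
  qp - pq - i; equality in A is expressed as membership of the difference in that ideal.\<close>

datatype gen = Gp | Gq

type_synonym fa = "gen list \<Rightarrow> complex"

definition fa_mult :: "fa \<Rightarrow> fa \<Rightarrow> fa" where
  "fa_mult f g = (\<lambda>w. \<Sum>i\<le>length w. f (take i w) * g (drop i w))"

definition fa_word :: "gen list \<Rightarrow> fa" where
  "fa_word u = (\<lambda>v. if v = u then 1 else 0)"

definition fa_scale :: "complex \<Rightarrow> fa \<Rightarrow> fa" where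
  "fa_scale c f = (\<lambda>w. c * f w)"

definition fa_one :: fa where
  "fa_one = fa_word []"

primrec fa_pow :: "fa \<Rightarrow> nat \<Rightarrow> fa" where
  "fa_pow f 0 = fa_one"
| "fa_pow f (Suc m) = fa_mult f (fa_pow f m)"

definition fa_poly :: "complex poly \<Rightarrow> fa \<Rightarrow> fa" where
  "fa_poly P x = (\<Sum>j\<le>degree P. fa_scale (coeff P j) (fa_pow x j))"

definition weyl_rel :: fa where
  "weyl_rel = fa_word [Gq, Gp] - fa_word [Gp, Gq] - fa_scale \<i> fa_one"

inductive_set weyl_ideal :: "fa set" where
  gen: "weyl_rel \<in> weyl_ideal"
| zero: "0 \<in> weyl_ideal"
| add: "x \<in> weyl_ideal \<Longrightarrow> y \<in> weyl_ideal \<Longrightarrow> x + y \<in> weyl_ideal"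
| scale: "x \<in> weyl_ideal \<Longrightarrow> fa_scale c x \<in> weyl_ideal"
| mult_left: "x \<in> weyl_ideal \<Longrightarrow> fa_mult (fa_word u) x \<in> weyl_ideal"
| mult_right: "x \<in> weyl_ideal \<Longrightarrow> fa_mult x (fa_word u) \<in> weyl_ideal"

definition weyl_eq :: "fa \<Rightarrow> fa \<Rightarrow> bool" where
  "weyl_eq x y \<longleftrightarrow> x - y \<in> weyl_ideal"

definition weyl_z :: fa where
  "weyl_z = fa_scale (1/2) (fa_word [Gq, Gp] + fa_word [Gp, Gq])"

definition weyl_sum :: "nat \<Rightarrow> (nat \<Rightarrow> complex) \<Rightarrow> fa" where
  "weyl_sum n a = (\<Sum>k\<le>n. fa_scale (a k)
      (fa_word (replicate k Gq @ replicate n Gp @ replicate (n - k) Gq)))"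

definition is_assoc_poly :: "nat \<Rightarrow> (nat \<Rightarrow> complex) \<Rightarrow> complex poly \<Rightarrow> bool" where
  "is_assoc_poly n a P \<longleftrightarrow> degree P \<le> n \<and> weyl_eq (weyl_sum n a) (fa_poly P weyl_z)"

end

theory Submission
  imports Defs
begin

fun opg :: "gen \<Rightarrow> complex poly \<Rightarrow> complex poly" where
  "opg Gq v = pCons 0 v"
| "opg Gp v = smult (-\<i>) (pderiv v)"

definition opw :: "gen list \<Rightarrow> complex poly \<Rightarrow> complex poly" where
  "opw w v = foldr opg w v"

lemma opw_simps[simp]: "opw [] v = v" "opw (g # w) v = opg g (opw w v)"
  "opw (u @ w) v = opw u (opw w v)"
  by (simp_all add: opw_def)

lemma opg_add: "opg g (a + b) = opg g a + opg g b"
  by (cases g) (simp_all add: pderiv_add smult_add_right)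

lemma opg_smult: "opg g (smult c a) = smult c (opg g a)"
  by (cases g) (simp_all add: pderiv_smult mult.commute)

lemma opg_0: "opg g 0 = 0"
  by (cases g) (simp_all add: pderiv_0)

lemma opw_add: "opw w (a + b) = opw w a + opw w b"
  by (induct w) (simp_all add: opg_add)

lemma opw_smult: "opw w (smult c a) = smult c (opw w a)"
  by (induct w) (simp_all add: opg_smult)

lemma opw_0: "opw w 0 = 0"
  by (induct w) (simp_all add: opg_0)

lemma opw_sum: "opw w (\<Sum>i\<in>S. f i) = (\<Sum>i\<in>S. opw w (f i))"
  by (induct S rule: infinite_finite_induct) (simp_all add: opw_0 opw_add)

lemma smult_sum_right: "smult c (\<Sum>i\<in>S. f i) = (\<Sum>i\<in>S. smult c (f i))"
  by (induct S rule: infinite_finite_induct) (simp_all add: smult_add_right)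

definition supp :: "fa \<Rightarrow> gen list set" where
  "supp f = {w. f w \<noteq> 0}"

definition act :: "fa \<Rightarrow> complex poly \<Rightarrow> complex poly" where
  "act f v = (\<Sum>w\<in>supp f. smult (f w) (opw w v))"

lemma act_sup:
  assumes "finite S" "supp f \<subseteq> S"
  shows "act f v = (\<Sum>w\<in>S. smult (f w) (opw w v))"
  unfolding act_def
  by (rule sum.mono_neutral_left) (use assms in \<open>auto simp: supp_def\<close>)

lemma supp_word: "supp (fa_word u) = {u}"
  by (auto simp: supp_def fa_word_def)

lemma act_word: "act (fa_word u) v = opw u v"
  unfolding act_def supp_word by (simp add: fa_word_def)

lemma act_add:
  assumes "finite (supp x)" "finite (supp y)"
  shows "finite (supp (x + y))" "act (x + y) v = act x v + act y v"
proof -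
  have s: "supp (x + y) \<subseteq> supp x \<union> supp y" by (auto simp: supp_def)
  show "finite (supp (x + y))" using s assms finite_subset by blast
  have "act (x + y) v = (\<Sum>w\<in>supp x \<union> supp y. smult ((x + y) w) (opw w v))"
    by (rule act_sup) (use s assms in auto)
  also have "\<dots> = (\<Sum>w\<in>supp x \<union> supp y. smult (x w) (opw w v))
       + (\<Sum>w\<in>supp x \<union> supp y. smult (y w) (opw w v))"
    by (simp add: smult_add_left sum.distrib)
  also have "\<dots> = act x v + act y v"
    using assms by (simp add: act_sup[of "supp x \<union> supp y"])
  finally show "act (x + y) v = act x v + act y v" .
qed

lemma act_diff:
  assumes "finite (supp x)" "finite (supp y)"
  shows "finite (supp (x - y))" "act (x - y) v = act x v - act y v"
proof -
  have s: "supp (x - y) \<subseteq> supp x \<union> supp y" by (auto simp: supp_def)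
  show "finite (supp (x - y))" using s assms finite_subset by blast
  have "act (x - y) v = (\<Sum>w\<in>supp x \<union> supp y. smult ((x - y) w) (opw w v))"
    by (rule act_sup) (use s assms in auto)
  also have "\<dots> = (\<Sum>w\<in>supp x \<union> supp y. smult (x w) (opw w v))
       - (\<Sum>w\<in>supp x \<union> supp y. smult (y w) (opw w v))"
    by (simp add: smult_diff_left sum_subtractf)
  also have "\<dots> = act x v - act y v"
    using assms by (simp add: act_sup[of "supp x \<union> supp y"])
  finally show "act (x - y) v = act x v - act y v" .
qed

lemma act_scale:
  assumes "finite (supp x)"
  shows "finite (supp (fa_scale c x))" "act (fa_scale c x) v = smult c (act x v)"
proof -
  have s: "supp (fa_scale c x) \<subseteq> supp x" by (auto simp: supp_def fa_scale_def)
  show "finite (supp (fa_scale c x))" using s assms finite_subset by blast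
  have "act (fa_scale c x) v = (\<Sum>w\<in>supp x. smult (fa_scale c x w) (opw w v))"
    by (rule act_sup) (use s assms in auto)
  also have "\<dots> = smult c (act x v)"
    by (simp add: act_def fa_scale_def smult_sum_right)
  finally show "act (fa_scale c x) v = smult c (act x v)" .
qed

lemma mult_word_left:
  "fa_mult (fa_word u) x w = (if take (length u) w = u then x (drop (length u) w) else 0)"
proof -
  have e: "(if take i w = u then 1 else 0) * x (drop i w)
      = (if i = length u then (if take (length u) w = u then x (drop (length u) w) else 0) else 0)"
    if "i \<le> length w" for i :: nat
    using that by auto
  have "fa_mult (fa_word u) x w = (\<Sum>i\<le>length w. (if take i w = u then 1 else 0) * x (drop i w))"
    by (simp add: fa_mult_def fa_word_def)
  also have "\<dots> = (\<Sum>i\<le>length w. (if i = length u then (if take (length u) w = u then x (drop (length u) w) else 0) else 0))"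
    by (rule sum.cong) (simp_all add: e)
  also have "\<dots> = (if take (length u) w = u then x (drop (length u) w) else 0)"
    by (auto simp: sum.delta dest: arg_cong[where f=length])
  finally show ?thesis .
qed

lemma mult_word_right:
  "fa_mult x (fa_word u) w = (if length u \<le> length w \<and> drop (length w - length u) w = u
      then x (take (length w - length u) w) else 0)"
proof -
  let ?c = "length u \<le> length w \<and> drop (length w - length u) w = u"
  have e: "x (take i w) * (if drop i w = u then 1 else 0)
      = (if i = length w - length u then (if ?c then x (take (length w - length u) w) else 0) else 0)"
    if "i \<le> length w" for i :: nat
    using that by (auto dest: arg_cong[where f=length])
  have "fa_mult x (fa_word u) w = (\<Sum>i\<le>length w. x (take i w) * (if drop i w = u then 1 else 0))"
    by (simp add: fa_mult_def fa_word_def)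
  also have "\<dots> = (\<Sum>i\<le>length w. (if i = length w - length u then (if ?c then x (take (length w - length u) w) else 0) else 0))"
    by (rule sum.cong) (simp_all add: e)
  also have "\<dots> = (if ?c then x (take (length w - length u) w) else 0)"
    by (auto simp: sum.delta)
  finally show ?thesis .
qed

lemma act_mult_left:
  assumes "finite (supp x)"
  shows "finite (supp (fa_mult (fa_word u) x))" "act (fa_mult (fa_word u) x) v = opw u (act x v)"
proof -
  let ?S = "(\<lambda>w. u @ w) ` supp x"
  have s: "supp (fa_mult (fa_word u) x) \<subseteq> ?S"
  proof
    fix w assume "w \<in> supp (fa_mult (fa_word u) x)"
    then have "take (length u) w = u" "x (drop (length u) w) \<noteq> 0"
      by (auto simp: supp_def mult_word_left split: if_splits)
    then show "w \<in> ?S" unfolding supp_def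
      by (metis (mono_tags, lifting) append_take_drop_id image_eqI mem_Collect_eq)
  qed
  show "finite (supp (fa_mult (fa_word u) x))" using s assms finite_subset by blast
  have "act (fa_mult (fa_word u) x) v = (\<Sum>w\<in>?S. smult (fa_mult (fa_word u) x w) (opw w v))"
    by (rule act_sup) (use s assms in auto)
  also have "\<dots> = (\<Sum>w\<in>supp x. smult (fa_mult (fa_word u) x (u @ w)) (opw (u @ w) v))"
    by (subst sum.reindex) (auto simp: inj_on_def)
  also have "\<dots> = (\<Sum>w\<in>supp x. opw u (smult (x w) (opw w v)))"
    by (simp add: mult_word_left opw_smult)
  also have "\<dots> = opw u (act x v)"
    by (simp add: act_def opw_sum)
  finally show "act (fa_mult (fa_word u) x) v = opw u (act x v)" .
qed

lemma act_mult_right: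
  assumes "finite (supp x)"
  shows "finite (supp (fa_mult x (fa_word u)))" "act (fa_mult x (fa_word u)) v = act x (opw u v)"
proof -
  let ?S = "(\<lambda>w. w @ u) ` supp x"
  have s: "supp (fa_mult x (fa_word u)) \<subseteq> ?S"
  proof
    fix w assume "w \<in> supp (fa_mult x (fa_word u))"
    then have "drop (length w - length u) w = u" "x (take (length w - length u) w) \<noteq> 0"
      by (auto simp: supp_def mult_word_right split: if_splits)
    then show "w \<in> ?S" unfolding supp_def
      by (metis (mono_tags, lifting) append_take_drop_id image_eqI mem_Collect_eq)
  qed
  show "finite (supp (fa_mult x (fa_word u)))" using s assms finite_subset by blast
  have "act (fa_mult x (fa_word u)) v = (\<Sum>w\<in>?S. smult (fa_mult x (fa_word u) w) (opw w v))"
    by (rule act_sup) (use s assms in auto)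
  also have "\<dots> = (\<Sum>w\<in>supp x. smult (fa_mult x (fa_word u) (w @ u)) (opw (w @ u) v))"
    by (subst sum.reindex) (auto simp: inj_on_def)
  also have "\<dots> = (\<Sum>w\<in>supp x. smult (x w) (opw w (opw u v)))"
    by (simp add: mult_word_right)
  also have "\<dots> = act x (opw u v)"
    by (simp add: act_def)
  finally show "act (fa_mult x (fa_word u)) v = act x (opw u v)" .
qed

lemma supp_zero: "supp 0 = {}" by (simp add: supp_def)

lemma ideal_act: "x \<in> weyl_ideal \<Longrightarrow> finite (supp x) \<and> (\<forall>v. act x v = 0)"
proof (induct rule: weyl_ideal.induct)
  case gen
  have f: "finite (supp (fa_word u))" for u by (simp add: supp_word)
  have f1: "finite (supp fa_one)" by (simp add: fa_one_def supp_word)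
  let ?A = "fa_word [Gq, Gp]" and ?B = "fa_word [Gp, Gq]" and ?C = "fa_scale \<i> fa_one"
  have fC: "finite (supp ?C)" using act_scale(1)[OF f1] .
  have fAB: "finite (supp (?A - ?B))" using act_diff(1)[OF f f] .
  have "finite (supp (?A - ?B - ?C))" using act_diff(1)[OF fAB fC] .
  moreover have "act (?A - ?B - ?C) v = 0" for v
  proof -
    have "act (?A - ?B - ?C) v = opw [Gq, Gp] v - opw [Gp, Gq] v - smult \<i> v"
      using act_diff(2)[OF fAB fC] act_diff(2)[OF f f] act_scale(2)[OF f1] act_word
      by (simp add: fa_one_def)
    also have "\<dots> = 0"
      by (simp add: pderiv_pCons smult_add_right)
    finally show ?thesis .
  qed
  ultimately show ?case unfolding weyl_rel_def by blast
next
  case zero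
  then show ?case by (simp add: act_def supp_def)
next
  case (add x y)
  then show ?case using act_add[of x y] by (simp add: plus_fun_def)
next
  case (scale x c)
  then show ?case by (simp add: act_scale)
next
  case (mult_left x u)
  then show ?case by (simp add: act_mult_left opw_0)
next
  case (mult_right x u)
  then show ?case by (simp add: act_mult_right)
qed

lemma act_zero: "finite (supp (0::fa))" "act 0 v = 0"
  by (simp_all add: act_def supp_def)

lemma act_sum:
  assumes "finite S" "\<And>i. i \<in> S \<Longrightarrow> finite (supp (f i))"
  shows "finite (supp (\<Sum>i\<in>S. f i)) \<and> act (\<Sum>i\<in>S. f i) v = (\<Sum>i\<in>S. act (f i) v)"
  using assms
proof (induct S rule: finite_induct)
  case empty
  then show ?case by (simp add: act_def supp_def)
next
  case (insert x F)
  then have h: "finite (supp (\<Sum>i\<in>F. f i))" "act (\<Sum>i\<in>F. f i) v = (\<Sum>i\<in>F. act (f i) v)"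
    "finite (supp (f x))" by auto
  show ?case using insert(1,2) act_add[OF h(3) h(1)] h(2) by (simp add: plus_fun_def)
qed

lemma fa_mult_add_left: "fa_mult (f + g) h = fa_mult f h + fa_mult g h"
  by (rule ext) (simp add: fa_mult_def ring_distribs sum.distrib)

lemma fa_mult_scale_left: "fa_mult (fa_scale c f) h = fa_scale c (fa_mult f h)"
  by (rule ext) (simp add: fa_mult_def fa_scale_def sum_distrib_left mult.assoc)

definition opz :: "complex poly \<Rightarrow> complex poly" where
  "opz v = smult (1/2) (opw [Gq, Gp] v + opw [Gp, Gq] v)"

lemma act_mult_z:
  assumes g: "finite (supp g)"
  shows "finite (supp (fa_mult weyl_z g)) \<and> act (fa_mult weyl_z g) v = opz (act g v)"
proof -
  have e: "fa_mult weyl_z g = fa_scale (1/2) (fa_mult (fa_word [Gq, Gp]) g + fa_mult (fa_word [Gp, Gq]) g)"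
    by (simp add: weyl_z_def fa_mult_scale_left fa_mult_add_left)
  note A = act_mult_left[OF g, of "[Gq, Gp]"] and B = act_mult_left[OF g, of "[Gp, Gq]"]
  note C = act_add[OF A(1) B(1)]
  show ?thesis unfolding e using act_scale[OF C(1)] C(2) A(2) B(2) by (simp add: opz_def)
qed

lemma act_pow_z:
  "finite (supp (fa_pow weyl_z j)) \<and> act (fa_pow weyl_z j) v = (opz ^^ j) v"
proof (induct j arbitrary: v)
  case 0
  then show ?case by (simp add: fa_one_def supp_word act_word)
next
  case (Suc j)
  then show ?case using act_mult_z[of "fa_pow weyl_z j"] by simp
qed

lemma opz_monom: "opz (monom 1 m) = smult (- \<i> * (of_nat m + 1/2)) (monom 1 m)"
proof -
  have a: "opw [Gq, Gp] (monom 1 m) = monom (- \<i> * of_nat m) m"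
    by (cases m) (simp_all add: pderiv_monom smult_monom monom_Suc[symmetric] mult.commute)
  have b: "opw [Gp, Gq] (monom 1 m) = monom (- \<i> * of_nat (Suc m)) m"
    by (simp add: pderiv_monom smult_monom monom_Suc[symmetric] mult.commute)
  show ?thesis unfolding opz_def a b
    by (simp add: smult_monom add_monom algebra_simps)
qed

lemma opz_pow_monom: "(opz ^^ j) (monom 1 m) = smult ((- \<i> * (of_nat m + 1/2)) ^ j) (monom 1 m)"
proof (induct j)
  case 0 then show ?case by simp
next
  case (Suc j)
  have "opz (smult c (monom 1 m)) = smult c (opz (monom 1 m))" for c
    unfolding opz_def opw_smult by (simp only: smult_add_right[symmetric] smult_smult mult.commute)
  then show ?case using Suc by (simp add: opz_monom mult.commute)
qed

lemma act_poly_z: "finite (supp (fa_poly P weyl_z)) \<and>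
  act (fa_poly P weyl_z) (monom 1 m) = smult (poly P (- \<i> * (of_nat m + 1/2))) (monom 1 m)"
proof -
  have f: "finite (supp (fa_scale (coeff P j) (fa_pow weyl_z j)))" for j
    using act_scale(1) act_pow_z by blast
  have a: "act (fa_scale (coeff P j) (fa_pow weyl_z j)) (monom 1 m)
     = smult (coeff P j * (- \<i> * (of_nat m + 1/2)) ^ j) (monom 1 m)" for j
    using act_scale(2)[of "fa_pow weyl_z j"] act_pow_z[of j] by (simp add: opz_pow_monom)
  show ?thesis unfolding fa_poly_def using act_sum[of "{..degree P}", OF _ f]
    by (simp add: a poly_altdef smult_sum)
qed

definition ffc :: "nat \<Rightarrow> nat \<Rightarrow> complex" where
  "ffc N j = (\<Prod>i<j. (of_nat N - of_nat i))"

lemma ffc_zero: "N < j \<Longrightarrow> ffc N j = 0"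
  unfolding ffc_def by (rule prod_zero) auto

lemma opw_rep_q: "opw (replicate j Gq) (monom c N) = monom c (N + j)"
  by (induct j) (simp_all add: monom_Suc)

lemma opw_rep_p: "opw (replicate j Gp) (monom c N) = monom (c * (- \<i>) ^ j * ffc N j) (N - j)"
proof (induct j)
  case 0 then show ?case by (simp add: ffc_def)
next
  case (Suc j)
  have "opw (replicate (Suc j) Gp) (monom c N) = smult (- \<i>) (pderiv (monom (c * (- \<i>) ^ j * ffc N j) (N - j)))"
    using Suc by simp
  also have "\<dots> = monom (- \<i> * (of_nat (N - j) * (c * (- \<i>) ^ j * ffc N j))) (N - Suc j)"
    by (simp add: pderiv_monom smult_monom)
  also have "\<dots> = monom (c * (- \<i>) ^ Suc j * ffc N (Suc j)) (N - Suc j)"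
  proof (cases "j \<le> N")
    case True
    then show ?thesis by (simp add: ffc_def of_nat_diff algebra_simps)
  next
    case False
    then show ?thesis by (simp add: ffc_zero)
  qed
  finally show ?case .
qed

lemma opw_word_monom:
  assumes "k \<le> n"
  shows "opw (replicate k Gq @ replicate n Gp @ replicate (n - k) Gq) (monom 1 m)
     = monom ((- \<i>) ^ n * ffc (m + (n - k)) n) m"
proof (cases "k \<le> m")
  case True
  then show ?thesis using assms by (simp add: opw_rep_q opw_rep_p)
next
  case False
  then have "ffc (m + (n - k)) n = 0" using assms by (intro ffc_zero) auto
  then show ?thesis by (simp add: opw_rep_q opw_rep_p opw_0)
qed

lemma act_weyl_sum: "finite (supp (weyl_sum n a)) \<and>
  act (weyl_sum n a) (monom 1 m) = monom ((\<Sum>k\<le>n. a k * ((- \<i>) ^ n * ffc (m + (n - k)) n))) m"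
proof -
  let ?w = "\<lambda>k. fa_word (replicate k Gq @ replicate n Gp @ replicate (n - k) Gq)"
  have f: "finite (supp (fa_scale (a k) (?w k)))" for k
    using act_scale(1) supp_word by (metis finite.emptyI finite_insert)
  have e: "act (fa_scale (a k) (?w k)) (monom 1 m) = monom (a k * ((- \<i>) ^ n * ffc (m + (n - k)) n)) m"
    if "k \<le> n" for k
    using that act_scale(2)[of "?w k"] opw_word_monom[OF that, of m] by (simp del: opw_simps(3) add: supp_word act_word smult_monom)
  show ?thesis unfolding weyl_sum_def using act_sum[of "{..n}", OF _ f]
    by (simp add: e monom_sum)
qed

theorem proposition4p4:
  fixes n :: nat and a :: "nat \<Rightarrow> real" and P :: "complex poly"
  assumes "\<And>k. k \<le> n \<Longrightarrow> a k = a (n - k)"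
    and "is_assoc_poly n (\<lambda>k. complex_of_real (a k)) P"
  shows "\<forall>x. poly P (- x) = (-1) ^ n * poly P x"
proof -
  define b where "b = (\<lambda>k. complex_of_real (a k))"
  have sym: "b k = b (n - k)" if "k \<le> n" for k using assms(1)[OF that] by (simp add: b_def)
  let ?c = "\<lambda>t::complex. - \<i> * (t + 1/2)"
  have A: "poly P (?c (of_nat m)) = (\<Sum>k\<le>n. b k * ((- \<i>) ^ n * ffc (m + (n - k)) n))" for m
  proof -
    have D: "weyl_sum n b - fa_poly P weyl_z \<in> weyl_ideal"
      using assms(2) by (simp add: is_assoc_poly_def weyl_eq_def b_def)
    have "act (weyl_sum n b - fa_poly P weyl_z) (monom 1 m) = 0"
      using ideal_act[OF D] by blast
    then have "act (weyl_sum n b) (monom 1 m) = act (fa_poly P weyl_z) (monom 1 m)"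
      using act_diff(2)[of "weyl_sum n b" "fa_poly P weyl_z"] act_weyl_sum act_poly_z by simp
    then show ?thesis using act_weyl_sum[of n b m] act_poly_z[of P m]
      by (simp add: smult_monom)
  qed
  define pf where "pf t = (\<Sum>k\<le>n. b k * (\<Prod>j<n. (t + of_nat (n - k) - of_nat j)))" for t
  define F where "F = (\<Sum>k\<le>n. smult (b k) (\<Prod>j<n. [: of_nat (n - k) - of_nat j, 1 :]))"
  have polyF: "poly F t = pf t" for t
    by (simp add: F_def pf_def poly_sum poly_prod algebra_simps)
  define G where "G = pcompose P [: - \<i> / 2, - \<i> :] - smult ((- \<i>) ^ n) F"
  have polyG: "poly G t = poly P (?c t) - (- \<i>) ^ n * pf t" for t
    by (simp add: G_def poly_pcompose polyF algebra_simps)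
  have G0: "poly G (of_nat m) = 0" for m
  proof -
    have "pf (of_nat m) = (\<Sum>k\<le>n. b k * ffc (m + (n - k)) n)"
      by (simp add: pf_def ffc_def algebra_simps)
    then show ?thesis using A[of m] by (simp add: polyG sum_distrib_left algebra_simps)
  qed
  have "G = 0"
  proof (rule ccontr)
    assume "G \<noteq> 0"
    then have "finite {x. poly G x = 0}" by (rule poly_roots_finite)
    moreover have "range (of_nat :: nat \<Rightarrow> complex) \<subseteq> {x. poly G x = 0}" using G0 by auto
    ultimately have "finite (range (of_nat :: nat \<Rightarrow> complex))" using finite_subset by blast
    then show False using finite_imageD[of "of_nat :: nat \<Rightarrow> complex" UNIV] inj_of_nat by auto
  qed
  then have E: "poly P (?c t) = (- \<i>) ^ n * pf t" for t
    using polyG[of t] by simp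
  have prodrefl: "(\<Prod>j<n. (- t - 1 + of_nat (n - k) - of_nat j))
      = (-1) ^ n * (\<Prod>j<n. (t + of_nat k - of_nat j))" if "k \<le> n" for k and t :: complex
  proof -
    have "(\<Prod>j<n. (- t - 1 + of_nat (n - k) - of_nat j))
        = (\<Prod>j<n. (- t - 1 + of_nat (n - k) - of_nat (n - 1 - j)))"
      by (rule prod.reindex_bij_witness[where i="\<lambda>j. n - 1 - j" and j="\<lambda>j. n - 1 - j"]) auto
    also have "\<dots> = (\<Prod>j<n. (-1) * (t + of_nat k - of_nat j))"
      by (rule prod.cong) (use that in \<open>auto simp: of_nat_diff algebra_simps\<close>)
    also have "\<dots> = (-1) ^ n * (\<Prod>j<n. (t + of_nat k - of_nat j))"
      by (subst prod.distrib) simp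
    finally show ?thesis .
  qed
  have pfsym: "pf (- t - 1) = (-1) ^ n * pf t" for t
  proof -
    have "pf (- t - 1) = (\<Sum>k\<le>n. b k * ((-1) ^ n * (\<Prod>j<n. (t + of_nat k - of_nat j))))"
      unfolding pf_def by (rule sum.cong[OF refl]) (metis atMost_iff prodrefl)
    also have "\<dots> = (-1) ^ n * (\<Sum>k\<le>n. b k * (\<Prod>j<n. (t + of_nat k - of_nat j)))"
      by (simp add: sum_distrib_left algebra_simps)
    also have "(\<Sum>k\<le>n. b k * (\<Prod>j<n. (t + of_nat k - of_nat j)))
        = (\<Sum>k\<le>n. b (n - k) * (\<Prod>j<n. (t + of_nat (n - k) - of_nat j)))"
      by (rule sum.reindex_bij_witness[where i="\<lambda>k. n - k" and j="\<lambda>k. n - k"]) auto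
    also have "\<dots> = pf t"
      unfolding pf_def by (rule sum.cong) (simp_all flip: sym)
    finally show ?thesis .
  qed
  show ?thesis
  proof
    fix x :: complex
    define t where "t = \<i> * x - 1/2"
    have x1: "?c t = x" by (simp add: t_def algebra_simps)
    have x2: "?c (- t - 1) = - x" by (simp add: t_def algebra_simps)
    have "poly P (- x) = (- \<i>) ^ n * pf (- t - 1)" using E[of "- t - 1"] x2 by simp
    also have "\<dots> = (-1) ^ n * ((- \<i>) ^ n * pf t)" by (simp add: pfsym)
    also have "\<dots> = (-1) ^ n * poly P x" using E[of t] x1 by simp
    finally show "poly P (- x) = (-1) ^ n * poly P x" .
  qed
qed

end
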